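(* Let $G$ be a connected plane (multi)graph with at least two vertices such that every internal vertex and every internal face has degree at least $4$. Let $b$ be the number of external vertices. Then the average degree of the external vertices of $G$ is at most $3-\frac{4}{b}$. In particular, $G$ has an external vertex of degree less than $3$.
   Context: A plane graph is a finite planar graph with a fixed embedding in the plane. The external face is the unbounded face; other faces are internal. A vertex is external if it lies on the boundary of the external face, and internal otherwise. The degree of a face is its degree as a vertex of the dual graph, i.e. the number of edges on its boundary counted with multiplicity. *)

theory Defs
  imports Complex_Main "HOL-Combinatorics.Orbits" "HOL-Combinatorics.Permutations"
begin

text \<open>Connected plane multigraphs are represented combinatorially by combinatorial maps
(rotation systems): a finite set D of darts (half-edges), a fixed-point-free involution
alpha on D pairing the two darts of each edge, and a permutation sigma on D giving the
cyclic order of darts around each vertex. Loops and parallel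
edges are allowed. The map is connected if the group generated by alpha and sigma acts
transitively on D, and it is plane (genus 0) iff V - E + F = 2.\<close>

definition map_verts :: "'a set \<Rightarrow> ('a \<Rightarrow> 'a) \<Rightarrow> 'a set set" where
  "map_verts D \<sigma> = {orbit \<sigma> d | d. d \<in> D}"

definition map_edges :: "'a set \<Rightarrow> ('a \<Rightarrow> 'a) \<Rightarrow> 'a set set" where
  "map_edges D \<alpha> = {orbit \<alpha> d | d. d \<in> D}"

definition map_faces :: "'a set \<Rightarrow> ('a \<Rightarrow> 'a) \<Rightarrow> ('a \<Rightarrow> 'a) \<Rightarrow> 'a set set" where
  "map_faces D \<alpha> \<sigma> = {orbit (\<sigma> \<circ> \<alpha>) d | d. d \<in> D}"

definition comb_map :: "'a set \<Rightarrow> ('a \<Rightarrow> 'a) \<Rightarrow> ('a \<Rightarrow> 'a) \<Rightarrow> bool" where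
  "comb_map D \<alpha> \<sigma> \<longleftrightarrow> finite D \<and> \<alpha> permutes D \<and> \<sigma> permutes D \<and>
     (\<forall>d\<in>D. \<alpha> d \<noteq> d \<and> \<alpha> (\<alpha> d) = d)"

definition map_connected :: "'a set \<Rightarrow> ('a \<Rightarrow> 'a) \<Rightarrow> ('a \<Rightarrow> 'a) \<Rightarrow> bool" where
  "map_connected D \<alpha> \<sigma> \<longleftrightarrow>
     (\<forall>d\<in>D. \<forall>e\<in>D. (d, e) \<in> ({(x, \<alpha> x) | x. x \<in> D} \<union> {(x, \<sigma> x) | x. x \<in> D})\<^sup>*)"

definition plane_map :: "'a set \<Rightarrow> ('a \<Rightarrow> 'a) \<Rightarrow> ('a \<Rightarrow> 'a) \<Rightarrow> bool" where
  "plane_map D \<alpha> \<sigma> \<longleftrightarrow> comb_map D \<alpha> \<sigma> \<and> map_connected D \<alpha> \<sigma> \<and>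
     int (card (map_verts D \<sigma>)) - int (card (map_edges D \<alpha>)) + int (card (map_faces D \<alpha> \<sigma>)) = 2"

text \<open>Degree of a vertex = number of darts at it (loops count twice); degree of a face =
length of its boundary walk = number of darts in its orbit. Given the external face f0,
a vertex is external iff one of its darts lies on the boundary walk of f0.\<close>

definition ext_verts :: "'a set \<Rightarrow> ('a \<Rightarrow> 'a) \<Rightarrow> 'a set \<Rightarrow> 'a set set" where
  "ext_verts D \<sigma> f0 = {v \<in> map_verts D \<sigma>. v \<inter> f0 \<noteq> {}}"

end

theory Submission
  imports Defs
begin

lemma orbit_eq_of_mem:
  assumes "permutation p" "x \<in> orbit p a"
  shows "orbit p x = orbit p a"
proof
  show "orbit p x \<subseteq> orbit p a" using assms(2) orbit_trans by fast
  have "a \<in> orbit p x"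
    using orbit_swap[OF permutation_self_in_orbit[OF assms(1)] assms(2)] .
  then show "orbit p a \<subseteq> orbit p x" using orbit_trans by fast
qed

lemma orbits_sum:
  assumes "finite D" "p permutes D"
  shows "(\<Sum>X\<in>{orbit p d | d. d \<in> D}. card X) = card D"
proof -
  have perm: "permutation p" using permutes_imp_permutation assms by blast
  let ?P = "{orbit p d | d. d \<in> D}"
  have U: "\<Union> ?P = D"
    using permutes_orbit_subset[OF assms(2)] permutation_self_in_orbit[OF perm] by blast
  have fin: "finite ?P" using assms(1) by simp
  have sub: "\<forall>X\<in>?P. finite X"
    using permutes_orbit_subset[OF assms(2)] assms(1) finite_subset by blast
  have disj: "\<forall>A\<in>?P. \<forall>B\<in>?P. A \<noteq> B \<longrightarrow> A \<inter> B = {}"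
  proof (intro ballI impI)
    fix A B assume "A \<in> ?P" "B \<in> ?P" "A \<noteq> B"
    then obtain a b where ab: "A = orbit p a" "B = orbit p b" by blast
    show "A \<inter> B = {}"
    proof (rule ccontr)
      assume "A \<inter> B \<noteq> {}"
      then obtain x where "x \<in> orbit p a" "x \<in> orbit p b" using ab by blast
      then have "orbit p a = orbit p b" using orbit_eq_of_mem[OF perm] by metis
      then show False using ab \<open>A \<noteq> B\<close> by simp
    qed
  qed
  have "card (\<Union> ?P) = (\<Sum>X\<in>?P. card X)"
    by (rule card_Union_disjoint) (use fin sub disj in \<open>auto simp: pairwise_def disjnt_def\<close>)
  then show ?thesis using U by simp
qed

lemma orbit_invol:
  assumes "\<alpha> (\<alpha> d) = d"
  shows "orbit \<alpha> d = {d, \<alpha> d}"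
proof
  show "orbit \<alpha> d \<subseteq> {d, \<alpha> d}"
  proof
    fix y assume "y \<in> orbit \<alpha> d"
    then show "y \<in> {d, \<alpha> d}" by induct (use assms in auto)
  qed
  show "{d, \<alpha> d} \<subseteq> orbit \<alpha> d"
    using orbit.base[of \<alpha> d] orbit.step[of "\<alpha> d" \<alpha> d] assms by auto
qed

theorem lemma6p4:
  fixes D :: "'a set" and \<alpha> \<sigma> :: "'a \<Rightarrow> 'a" and f0 :: "'a set"
  assumes "plane_map D \<alpha> \<sigma>"
    and "f0 \<in> map_faces D \<alpha> \<sigma>"
    and "card (map_verts D \<sigma>) \<ge> 2"
    and "\<forall>v\<in>map_verts D \<sigma>. v \<notin> ext_verts D \<sigma> f0 \<longrightarrow> card v \<ge> 4"
    and "\<forall>f\<in>map_faces D \<alpha> \<sigma>. f \<noteq> f0 \<longrightarrow> card f \<ge> 4"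
  shows "((\<Sum>v\<in>ext_verts D \<sigma> f0. real (card v)) / real (card (ext_verts D \<sigma> f0))
           \<le> 3 - 4 / real (card (ext_verts D \<sigma> f0)))
           \<and> (\<exists>v\<in>ext_verts D \<sigma> f0. card v < 3)"
proof -
  have cm: "comb_map D \<alpha> \<sigma>" and eul: "int (card (map_verts D \<sigma>)) - int (card (map_edges D \<alpha>)) + int (card (map_faces D \<alpha> \<sigma>)) = 2"
    using assms(1) unfolding plane_map_def by auto
  have finD: "finite D" and pa: "\<alpha> permutes D" and ps: "\<sigma> permutes D"
    and inv: "\<forall>d\<in>D. \<alpha> d \<noteq> d \<and> \<alpha> (\<alpha> d) = d"
    using cm unfolding comb_map_def by auto
  have pf: "\<sigma> \<circ> \<alpha> permutes D" using permutes_compose[OF pa ps] .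
  have permS: "permutation \<sigma>" using permutes_imp_permutation finD ps by blast
  have permF: "permutation (\<sigma> \<circ> \<alpha>)" using permutes_imp_permutation finD pf by blast
  define V where "V = map_verts D \<sigma>"
  define E where "E = map_edges D \<alpha>"
  define F where "F = map_faces D \<alpha> \<sigma>"
  define B where "B = ext_verts D \<sigma> f0"
  have finV: "finite V" unfolding V_def map_verts_def using finD by simp
  have finF: "finite F" unfolding F_def map_faces_def using finD by simp
  have finE: "finite E" unfolding E_def map_edges_def using finD by simp
  have BV: "B \<subseteq> V" unfolding B_def V_def ext_verts_def by auto
  have sumV: "(\<Sum>v\<in>V. card v) = card D" unfolding V_def map_verts_def using orbits_sum[OF finD ps] .
  have sumF: "(\<Sum>v\<in>F. card v) = card D" unfolding F_def map_faces_def using orbits_sum[OF finD pf] .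
  have sumE: "(\<Sum>v\<in>E. card v) = card D" unfolding E_def map_edges_def using orbits_sum[OF finD pa] .
  have "\<forall>e\<in>E. card e = 2"
  proof
    fix e assume "e \<in> E"
    then obtain d where "d \<in> D" "e = orbit \<alpha> d" unfolding E_def map_edges_def by blast
    then show "card e = 2" using orbit_invol[of \<alpha> d] inv by auto
  qed
  then have cE: "2 * card E = card D" using sumE by simp
  have f0F: "f0 \<in> F" using assms(2) F_def by simp
  obtain d0 where d0: "d0 \<in> D" "f0 = orbit (\<sigma> \<circ> \<alpha>) d0" using assms(2) unfolding map_faces_def by blast
  have f0D: "f0 \<subseteq> D" using d0 permutes_orbit_subset[OF pf] by blast
  have finf0: "finite f0" using f0D finD finite_subset by blast
  have d0f: "d0 \<in> f0" using d0 permutation_self_in_orbit[OF permF] by blast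
  have vB: "orbit \<sigma> d0 \<in> B" unfolding B_def ext_verts_def map_verts_def
    using d0 d0f permutation_self_in_orbit[OF permS, of d0] by blast
  have finB: "finite B" using BV finV finite_subset by blast
  have bpos: "card B > 0" using vB finB card_gt_0_iff by blast
  define g where "g v = (SOME x. x \<in> v \<inter> f0)" for v
  have gv: "g v \<in> v \<inter> f0" if "v \<in> B" for v
    using that unfolding g_def B_def ext_verts_def by (metis (mono_tags, lifting) mem_Collect_eq someI_ex ex_in_conv)
  have "inj_on g B"
  proof (rule inj_onI)
    fix v w assume "v \<in> B" "w \<in> B" "g v = g w"
    then obtain a b where ab: "v = orbit \<sigma> a" "w = orbit \<sigma> b"
      using BV unfolding V_def map_verts_def by blast
    have "g v \<in> v" using gv \<open>v \<in> B\<close> by blast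
    moreover have "g w \<in> w" using gv \<open>w \<in> B\<close> by blast
    ultimately have "g v \<in> orbit \<sigma> a" "g v \<in> orbit \<sigma> b" using \<open>g v = g w\<close> ab by auto
    then show "v = w" using ab orbit_eq_of_mem[OF permS] by metis
  qed
  moreover have "g ` B \<subseteq> f0" using gv by blast
  ultimately have bf0: "card B \<le> card f0" using card_inj_on_le finf0 by blast
  define S where "S = (\<Sum>v\<in>B. card v)"
  have s1: "(\<Sum>v\<in>V. card v) = (\<Sum>v\<in>V-B. card v) + S"
    unfolding S_def by (rule sum.subset_diff[OF BV finV])
  have s2: "4 * card (V-B) \<le> (\<Sum>v\<in>V-B. card v)"
  proof -
    have "(\<Sum>v\<in>V-B. (4::nat)) \<le> (\<Sum>v\<in>V-B. card v)"
    proof (rule sum_mono)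
      fix v assume "v \<in> V - B"
      then show "4 \<le> card v" using assms(4) unfolding V_def B_def by blast
    qed
    then show ?thesis by simp
  qed
  have s3: "card (V - B) = card V - card B" using card_Diff_subset[OF finB BV] .
  have BleV: "card B \<le> card V" using card_mono[OF finV BV] .
  have vin: "S + 4 * card V \<le> card D + 4 * card B"
    using s1 s2 s3 BleV sumV by linarith
  have t1: "(\<Sum>v\<in>F. card v) = card f0 + (\<Sum>v\<in>F-{f0}. card v)"
    by (rule sum.remove[OF finF f0F])
  have t2: "4 * card (F-{f0}) \<le> (\<Sum>v\<in>F-{f0}. card v)"
  proof -
    have "(\<Sum>v\<in>F-{f0}. (4::nat)) \<le> (\<Sum>v\<in>F-{f0}. card v)"
    proof (rule sum_mono)
      fix v assume "v \<in> F - {f0}"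
      then show "4 \<le> card v" using assms(5) unfolding F_def by blast
    qed
    then show ?thesis by simp
  qed
  have t3: "card (F - {f0}) = card F - 1" using card_Diff_singleton[OF f0F] .
  have F1: "card F \<ge> 1" using card_gt_0_iff[of F] f0F finF by (metis One_nat_def Suc_leI empty_iff)
  have fin: "card f0 + 4 * card F \<le> card D + 4"
    using t1 t2 t3 F1 sumF by linarith
  have eul2: "int (card V) - int (card E) + int (card F) = 2" using eul unfolding V_def E_def F_def .
  have eul3: "card V + card F = 2 + card E" using eul2 by linarith
  have key0: "S + 4 \<le> 3 * card B"
    using vin fin eul3 cE bf0 by linarith
  have key: "int S \<le> 3 * int (card B) - 4" using key0 by linarith
  have rS: "(\<Sum>v\<in>B. real (card v)) = real S" unfolding S_def by simp
  have keyr: "real S \<le> 3 * real (card B) - 4" using key by linarith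
  have bp: "real (card B) > 0" using bpos by simp
  have part1: "real S / real (card B) \<le> 3 - 4 / real (card B)"
    using keyr bp by (simp add: field_simps)
  have part2: "\<exists>v\<in>B. card v < 3"
  proof (rule ccontr)
    assume "\<not> ?thesis"
    then have "\<forall>v\<in>B. card v \<ge> 3" by auto
    then have "(\<Sum>v\<in>B. card v) \<ge> (\<Sum>v\<in>B. 3)" by (intro sum_mono) auto
    then have "3 * card B \<le> S" unfolding S_def by simp
    then show False using key by linarith
  qed
  show ?thesis unfolding B_def[symmetric] rS using part1 part2 by blast
qed

end
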